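(* Let $\rho_1,\rho_2$ be finite nonempty sets of integers greater than $1$, each consisting of pairwise coprime elements. If $Q_{\rho_1}(x)=Q_{\rho_2}(x)$, then $\rho_1=\rho_2$.
   Context: For a finite nonempty set $\rho=\{r_1,\dots,r_s\}$ of integers with $r_i>1$ and $\gcd(r_i,r_j)=1$ for $i\ne j$, put $n_0=\prod_i r_i$ and define the inclusion-exclusion polynomial $$Q_\rho(x)=\prod_{I\subseteq\{1,\dots,s\}}\left(x^{n_0/\prod_{i\in I}r_i}-1\right)^{(-1)^{|I|}},$$ i.e. $Q_\rho(x)=\frac{(x^{n_0}-1)\prod_{i<j}(x^{n_{ij}}-1)\cdots}{\prod_i(x^{n_i}-1)\prod_{i<j<k}(x^{n_{ijk}}-1)\cdots}$ with $n_i=n_0/r_i$, $n_{ij}=n_0/(r_ir_j)$, etc.; it is a polynomial with integer coefficients. *)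

theory Defs
  imports "HOL-Computational_Algebra.Polynomial"
begin

definition xpow_minus_one :: "nat \<Rightarrow> int poly" where
  "xpow_minus_one k = monom 1 k - 1"

text \<open>Inclusion-exclusion polynomial Q_rho: with n0 the product of the elements of rho,
  the product over subsets I of rho of (x^(n0 / prod I) - 1)^((-1)^|I|), i.e. the product
  of the factors with |I| even divided by the product of the factors with |I| odd
  (the division is exact).\<close>
definition incl_excl_poly :: "nat set \<Rightarrow> int poly" where
  "incl_excl_poly \<rho> =
     (\<Prod>I\<in>{I. I \<subseteq> \<rho> \<and> even (card I)}. xpow_minus_one (\<Prod>\<rho> div \<Prod>I))
     div (\<Prod>I\<in>{I. I \<subseteq> \<rho> \<and> odd (card I)}. xpow_minus_one (\<Prod>\<rho> div \<Prod>I))"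

definition admissible_set :: "nat set \<Rightarrow> bool" where
  "admissible_set \<rho> \<longleftrightarrow> finite \<rho> \<and> \<rho> \<noteq> {} \<and> (\<forall>r\<in>\<rho>. r > 1) \<and>
     (\<forall>a\<in>\<rho>. \<forall>b\<in>\<rho>. a \<noteq> b \<longrightarrow> coprime a b)"

end

theory Submission imports Defs "HOL-Analysis.Complex_Transcendental" "HOL-Computational_Algebra.Fundamental_Theorem_Algebra"
begin

abbreviation CP :: "int poly \<Rightarrow> complex poly" where "CP \<equiv> map_poly of_int"

lemma CP_add: "CP (p + q) = CP p + CP q"
  by (rule poly_eqI) (simp add: coeff_map_poly)

lemma CP_diff: "CP (p - q) = CP p - CP q"
  by (rule poly_eqI) (simp add: coeff_map_poly)

lemma CP_mult: "CP (p * q) = CP p * CP q"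
  by (rule poly_eqI) (simp add: coeff_map_poly coeff_mult of_int_sum)

lemma CP_prod: "CP (\<Prod>x\<in>A. f x) = (\<Prod>x\<in>A. CP (f x))"
proof (induction A rule: infinite_finite_induct)
  case (infinite A) then show ?case by simp
next
  case empty then show ?case by simp
next
  case (insert x F) then show ?case by (simp add: CP_mult)
qed

lemma CP_P: "CP (xpow_minus_one n) = monom 1 n - 1"
  unfolding xpow_minus_one_def by (simp add: CP_diff map_poly_monom)

lemma CP_eq_0_iff: "CP p = 0 \<longleftrightarrow> p = 0"
  by (rule map_poly_eq_0_iff) auto

lemma CP_degree: "degree (CP p) = degree p"
  by (rule degree_map_poly) auto

lemma cP_nz: "n > 0 \<Longrightarrow> (monom 1 n - 1 :: 'a::comm_ring_1 poly) \<noteq> 0"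
proof
  assume "n > 0" "(monom 1 n - 1 :: 'a poly) = 0"
  then have "coeff (monom 1 n - 1 :: 'a poly) n = 0" by simp
  with \<open>n > 0\<close> show False by (simp add: coeff_monom)
qed

lemma lead_cP: "n > 0 \<Longrightarrow> lead_coeff (monom 1 n - 1 :: 'a::comm_ring_1 poly) = 1"
proof -
  assume n: "n > 0"
  have "degree (monom 1 n - 1 :: 'a poly) = n"
  proof (rule order_antisym)
    show "degree (monom 1 n - 1 :: 'a poly) \<le> n"
      by (rule degree_le) (auto simp: coeff_monom)
    show "n \<le> degree (monom 1 n - 1 :: 'a poly)"
      by (rule le_degree) (use n in \<open>simp add: coeff_monom\<close>)
  qed
  with n show ?thesis by (simp add: coeff_monom)
qed

lemma order_cP:
  assumes n: "n > 0"
  shows "order z (monom 1 n - 1 :: complex poly) = (if z ^ n = 1 then 1 else 0)"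
proof -
  let ?p = "monom 1 n - 1 :: complex poly"
  have nz: "?p \<noteq> 0" using cP_nz[OF n] .
  have ev: "poly ?p z = z ^ n - 1" by (simp add: poly_monom)
  have sq: "rsquarefree ?p"
  proof (subst rsquarefree_roots, intro allI notI)
    fix a assume h: "poly ?p a = 0 \<and> poly (pderiv ?p) a = 0"
    then have a1: "a ^ n = 1" by (simp add: poly_monom)
    from h have "of_nat n * a ^ (n - 1) = 0"
      by (simp add: pderiv_diff pderiv_monom poly_monom)
    with n have "a = 0" by simp
    with a1 n show False by (simp add: zero_power)
  qed
  show ?thesis
  proof (cases "z ^ n = 1")
    case True
    then have "poly ?p z = 0" using ev by simp
    then show ?thesis using rsquarefree_root_order[OF sq _ nz] True by simp
  next
    case False
    then have "poly ?p z \<noteq> 0" using ev by simp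
    then have "order z ?p = 0" by (rule order_0I)
    then show ?thesis using False by simp
  qed
qed

lemma order_prod:
  fixes f :: "'b \<Rightarrow> 'a::idom poly"
  assumes "finite A" "\<And>x. x \<in> A \<Longrightarrow> f x \<noteq> 0"
  shows "order z (\<Prod>x\<in>A. f x) = (\<Sum>x\<in>A. order z (f x))"
  using assms
proof (induction A rule: finite_induct)
  case empty
  then show ?case by (simp add: order_0I)
next
  case (insert x F)
  have "(\<Prod>x\<in>F. f x) \<noteq> 0" using insert by simp
  then have "f x * (\<Prod>x\<in>F. f x) \<noteq> 0" using insert by simp
  then show ?case using insert by (simp add: order_mult)
qed

lemma order_prod_cP:
  assumes "finite F" "\<And>I. I \<in> F \<Longrightarrow> m I > 0"
  shows "order z (\<Prod>I\<in>F. (monom 1 (m I) - 1 :: complex poly)) = card {I\<in>F. z ^ m I = 1}"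
proof -
  have "order z (\<Prod>I\<in>F. (monom 1 (m I) - 1 :: complex poly)) =
        (\<Sum>I\<in>F. order z (monom 1 (m I) - 1 :: complex poly))"
    by (rule order_prod) (use assms cP_nz in auto)
  also have "\<dots> = (\<Sum>I\<in>F. if z ^ m I = 1 then 1 else 0)"
    by (rule sum.cong) (use assms order_cP in auto)
  also have "\<dots> = card {I\<in>F. z ^ m I = 1}"
    using assms(1) by (simp add: sum.inter_filter[symmetric])
  finally show ?thesis .
qed

lemma complex_dvd_by_order:
  fixes p q :: "complex poly"
  assumes "p \<noteq> 0" "q \<noteq> 0" "\<And>z. order z q \<le> order z p"
  shows "q dvd p"
  using assms
proof (induction "degree q" arbitrary: p q rule: less_induct)
  case less
  show ?case
  proof (cases "degree q = 0")
    case True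
    then obtain c where "q = [:c:]" by (metis degree_eq_zeroE)
    with less.prems have "c \<noteq> 0" by simp
    then show ?thesis using \<open>q = [:c:]\<close> by (simp add: const_poly_dvd_iff dvd_field_iff)
  next
    case False
    then have "\<not> constant (poly q)" by (subst constant_degree)
    then obtain z where z: "poly q z = 0" using fundamental_theorem_of_algebra by blast
    then obtain q' where q': "q = [:-z,1:] * q'" by (metis poly_eq_0_iff_dvd dvdE)
    have "order z q \<noteq> 0" using z less.prems order_root by blast
    then have "poly p z = 0" using less.prems(3)[of z] order_root by fastforce
    then obtain p' where p': "p = [:-z,1:] * p'" by (metis poly_eq_0_iff_dvd dvdE)
    have nz: "p' \<noteq> 0" "q' \<noteq> 0" using less.prems p' q' by auto
    have "degree q = Suc (degree q')" unfolding q' using nz by (subst degree_mult_eq) auto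
    then have "degree q' < degree q" by simp
    moreover have "order w q' \<le> order w p'" for w
      using less.prems(3)[of w] less.prems(1,2) unfolding p' q'
      by (subst (asm) (1 2) order_mult) auto
    ultimately have "q' dvd p'" using less.hyps nz by blast
    then show ?thesis unfolding p' q' by (rule mult_dvd_mono[OF dvd_refl])
  qed
qed

lemma int_dvd_from_complex:
  fixes f g :: "int poly"
  assumes lc: "lead_coeff g = 1" and d: "CP g dvd CP f"
  shows "g dvd f"
proof -
  have g0: "g \<noteq> 0" using lc by auto
  obtain q r where qr: "pseudo_divmod f g = (q, r)" by (cases "pseudo_divmod f g")
  note pd = pseudo_divmod[OF g0 qr]
  have eq: "f = g * q + r" using pd(1) lc by simp
  have "CP f = CP g * CP q + CP r" using eq by (simp add: CP_add CP_mult)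
  then have "CP g dvd CP r" using d by (metis dvd_add_right_iff dvd_triv_left)
  have "r = 0"
  proof (rule ccontr)
    assume "r \<noteq> 0"
    then have "CP r \<noteq> 0" by (simp add: CP_eq_0_iff)
    then have "degree (CP g) \<le> degree (CP r)" using \<open>CP g dvd CP r\<close> dvd_imp_degree_le by blast
    then show False using pd(2) \<open>r \<noteq> 0\<close> by (simp add: CP_degree)
  qed
  then show ?thesis using eq by simp
qed

lemma prim_root_pow:
  assumes "m \<ge> 1"
  shows "exp (2 * of_real pi * \<i> / of_nat m) ^ k = 1 \<longleftrightarrow> m dvd k"
proof -
  have "exp (2 * of_real pi * \<i> / of_nat m) ^ k = exp (2 * of_real pi * \<i> * of_nat k / of_nat m)"
    by (simp add: exp_of_nat_mult[symmetric] mult_ac)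
  then show ?thesis using complex_root_unity_eq_1[OF assms] by simp
qed

lemma pow_gcd_one:
  fixes z :: complex
  assumes "z ^ a = 1" "z ^ b = 1" "a \<noteq> 0"
  shows "z ^ gcd a b = 1"
proof -
  obtain x y where "a * x = b * y + gcd a b" using bezout_nat[OF assms(3)] by blast
  then have "z ^ (a * x) = z ^ (b * y) * z ^ gcd a b" by (simp add: power_add)
  then show ?thesis using assms by (simp add: power_mult)
qed

lemma div_prod_subset:
  fixes \<rho> :: "nat set"
  assumes "finite \<rho>" "\<forall>r\<in>\<rho>. r > 0" "I \<subseteq> \<rho>"
  shows "\<Prod>\<rho> div \<Prod>I = \<Prod>(\<rho> - I)"
proof -
  have "\<Prod>\<rho> = \<Prod>(\<rho> - I) * \<Prod>I"
    using prod.subset_diff[OF assms(3,1), of "\<lambda>x. x"] by simp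
  moreover have "\<Prod>I > 0" using assms by (metis finite_subset prod_pos subsetD)
  ultimately show ?thesis by simp
qed

lemma key_pow:
  fixes \<rho> :: "nat set" and z :: complex
  assumes adm: "admissible_set \<rho>" and zN: "z ^ \<Prod>\<rho> = 1" and I: "I \<subseteq> \<rho>"
  shows "z ^ \<Prod>(\<rho> - I) = 1 \<longleftrightarrow> (\<forall>r\<in>I. z ^ \<Prod>(\<rho> - {r}) = 1)"
proof -
  have fin: "finite \<rho>" and pos: "\<forall>r\<in>\<rho>. r > 0"
    and cop: "\<forall>a\<in>\<rho>. \<forall>b\<in>\<rho>. a \<noteq> b \<longrightarrow> coprime a b"
    using adm unfolding admissible_set_def by auto
  have finI: "finite I" using I fin finite_subset by blast
  show ?thesis
  proof
    assume h: "z ^ \<Prod>(\<rho> - I) = 1"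
    show "\<forall>r\<in>I. z ^ \<Prod>(\<rho> - {r}) = 1"
    proof
      fix r assume "r \<in> I"
      then have "\<rho> - I \<subseteq> \<rho> - {r}" by auto
      then have "\<Prod>(\<rho> - I) dvd \<Prod>(\<rho> - {r})" using fin by (intro prod_dvd_prod_subset) auto
      then obtain k where "\<Prod>(\<rho> - {r}) = \<Prod>(\<rho> - I) * k" by (elim dvdE)
      then show "z ^ \<Prod>(\<rho> - {r}) = 1" using h by (simp add: power_mult)
    qed
  next
    assume all: "\<forall>r\<in>I. z ^ \<Prod>(\<rho> - {r}) = 1"
    have "\<And>J. J \<subseteq> I \<Longrightarrow> z ^ \<Prod>(\<rho> - J) = 1"
    proof -
      fix J assume "J \<subseteq> I"
      have "finite J" using finI \<open>J \<subseteq> I\<close> finite_subset by blast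
      then show "z ^ \<Prod>(\<rho> - J) = 1" using \<open>J \<subseteq> I\<close>
      proof (induction J rule: finite_induct)
        case empty
        then show ?case using zN by simp
      next
        case (insert r J)
        have JI: "J \<subseteq> I" using insert.prems by simp
        have r: "r \<in> \<rho>" "r \<notin> J" "r \<in> I" using insert.prems insert.hyps(2) I by auto
        have Jr: "J \<subseteq> \<rho>" using JI I by simp
        have IH: "z ^ \<Prod>(\<rho> - J) = 1" using insert.IH[OF JI] .
        have hr: "z ^ \<Prod>(\<rho> - {r}) = 1" using all r(3) by blast
        define c where "c = \<Prod>(\<rho> - insert r J)"
        have e1: "\<Prod>(\<rho> - J) = r * c"
        proof -
          have "\<Prod>(\<rho> - J) = r * \<Prod>((\<rho> - J) - {r})"
            using fin r by (intro prod.remove) auto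
          moreover have "(\<rho> - J) - {r} = \<rho> - insert r J" by auto
          ultimately show ?thesis by (simp add: c_def)
        qed
        have e2: "\<Prod>(\<rho> - {r}) = \<Prod>J * c"
        proof -
          have u: "\<rho> - {r} = J \<union> (\<rho> - insert r J)" using Jr r by auto
          have d: "J \<inter> (\<rho> - insert r J) = {}" by auto
          have fJ: "finite J" "finite (\<rho> - insert r J)" using insert.hyps(1) fin by auto
          show ?thesis unfolding c_def u using prod.union_disjoint[OF fJ d, of "\<lambda>x. x"] by simp
        qed
        have cop2: "coprime r (\<Prod>J)"
        proof (rule prod_coprime_right)
          fix x assume "x \<in> J"
          then have xr: "x \<in> \<rho>" "r \<noteq> x" using Jr r by auto
          show "coprime r x" using cop r(1) xr by simp
        qed
        have g: "gcd (r * c) (\<Prod>J * c) = c"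
        proof -
          have "c * gcd r (\<Prod>J) = gcd (c * r) (c * \<Prod>J)" by (rule gcd_mult_distrib_nat)
          then have "gcd (r * c) (\<Prod>J * c) = c * gcd r (\<Prod>J)" by (simp only: mult.commute)
          then show ?thesis using cop2 by simp
        qed
        have "c > 0" unfolding c_def using pos by (intro prod_pos) auto
        then have rc: "r * c \<noteq> 0" using pos r by auto
        have "z ^ (r * c) = 1" using IH e1 by simp
        moreover have "z ^ (\<Prod>J * c) = 1" using hr e2 by simp
        ultimately have "z ^ gcd (r * c) (\<Prod>J * c) = 1" using rc by (rule pow_gcd_one)
        then show ?case using g by (simp add: c_def)
      qed
    qed
    then show "z ^ \<Prod>(\<rho> - I) = 1" by simp
  qed
qed


lemma Q_order:
  fixes \<rho> :: "nat set"
  assumes adm: "admissible_set \<rho>"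
  shows "CP (incl_excl_poly \<rho>) \<noteq> 0 \<and>
    (\<forall>z. order z (CP (incl_excl_poly \<rho>)) =
       (if z ^ \<Prod>\<rho> = 1 \<and> (\<forall>r\<in>\<rho>. z ^ \<Prod>(\<rho> - {r}) \<noteq> 1) then 1 else 0))"
proof -
  have fin: "finite \<rho>" and pos: "\<forall>r\<in>\<rho>. r > 0"
    using adm unfolding admissible_set_def by auto
  define N where "N = \<Prod>\<rho>"
  define Ev where "Ev = {I. I \<subseteq> \<rho> \<and> even (card I)}"
  define Od where "Od = {I. I \<subseteq> \<rho> \<and> odd (card I)}"
  define m where "m I = \<Prod>\<rho> div \<Prod>I" for I :: "nat set"
  define A where "A = (\<Prod>I\<in>Ev. xpow_minus_one (m I))"
  define B where "B = (\<Prod>I\<in>Od. xpow_minus_one (m I))"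
  define e where "e z = (z ^ \<Prod>\<rho> = 1 \<and> (\<forall>r\<in>\<rho>. z ^ \<Prod>(\<rho> - {r}) \<noteq> 1))" for z :: complex
  have Qdef: "incl_excl_poly \<rho> = A div B"
    unfolding incl_excl_poly_def A_def B_def Ev_def Od_def m_def by simp
  have finEv: "finite Ev" and finOd: "finite Od"
    using fin unfolding Ev_def Od_def by (auto intro: finite_subset[of _ "Pow \<rho>"])
  have mI: "m I = \<Prod>(\<rho> - I)" if "I \<subseteq> \<rho>" for I
    unfolding m_def using div_prod_subset[OF fin pos that] .
  have mpos: "m I > 0" if "I \<subseteq> \<rho>" for I
    unfolding mI[OF that] using pos by (intro prod_pos) auto
  have mdvd: "m I dvd N" if "I \<subseteq> \<rho>" for I
    unfolding mI[OF that] N_def using fin by (intro prod_dvd_prod_subset) auto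
  have CA: "CP A = (\<Prod>I\<in>Ev. (monom 1 (m I) - 1 :: complex poly))"
    unfolding A_def by (simp add: CP_prod CP_P)
  have CB: "CP B = (\<Prod>I\<in>Od. (monom 1 (m I) - 1 :: complex poly))"
    unfolding B_def by (simp add: CP_prod CP_P)
  have A0: "CP A \<noteq> 0" unfolding CA using finEv mpos cP_nz by (auto simp: Ev_def)
  have B0: "CP B \<noteq> 0" unfolding CB using finOd mpos cP_nz by (auto simp: Od_def)
  have oA: "order z (CP A) = card {I\<in>Ev. z ^ m I = 1}" for z
    unfolding CA by (rule order_prod_cP[OF finEv]) (auto simp: Ev_def intro: mpos)
  have oB: "order z (CP B) = card {I\<in>Od. z ^ m I = 1}" for z
    unfolding CB by (rule order_prod_cP[OF finOd]) (auto simp: Od_def intro: mpos)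
  have count: "order z (CP A) = order z (CP B) + (if e z then 1 else 0)" for z
  proof (cases "z ^ N = 1")
    case False
    have "z ^ m I \<noteq> 1" if Isub: "I \<subseteq> \<rho>" for I
    proof
      assume h: "z ^ m I = 1"
      obtain k where "N = m I * k" using mdvd[OF Isub] by (elim dvdE)
      then have "z ^ N = 1" using h by (simp add: power_mult)
      with False show False by simp
    qed
    then have h1: "{I\<in>Ev. z ^ m I = 1} = {}" and h2: "{I\<in>Od. z ^ m I = 1} = {}"
      unfolding Ev_def Od_def by auto
    have "\<not> e z" using False unfolding e_def N_def by simp
    then show ?thesis unfolding oA oB h1 h2 by simp
  next
    case True
    define T where "T = {r\<in>\<rho>. z ^ \<Prod>(\<rho> - {r}) = 1}"
    have iff: "z ^ m I = 1 \<longleftrightarrow> I \<subseteq> T" if "I \<subseteq> \<rho>" for I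
      using key_pow[OF adm True[unfolded N_def] that] mI[OF that] that unfolding T_def by auto
    have sE: "{I\<in>Ev. z ^ m I = 1} = {I. I \<subseteq> T \<and> even (card I)}"
      using iff unfolding Ev_def T_def by auto
    have sO: "{I\<in>Od. z ^ m I = 1} = {I. I \<subseteq> T \<and> odd (card I)}"
      using iff unfolding Od_def T_def by auto
    show ?thesis
    proof (cases "T = {}")
      case True
      then have h1: "{I. I \<subseteq> T \<and> even (card I)} = {{}}" and h2: "{I. I \<subseteq> T \<and> odd (card I)} = {}"
        by auto
      have "e z" using True \<open>z ^ N = 1\<close> unfolding e_def T_def N_def by auto
      then show ?thesis unfolding oA oB sE sO h1 h2 by simp
    next
      case False
      have fT: "finite T" using fin unfolding T_def by simp
      have "card {S. S \<subseteq> T \<and> {} \<subseteq> S \<and> even (card S)} = card {S. S \<subseteq> T \<and> {} \<subseteq> S \<and> odd (card S)}"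
        using False fT by (intro card_subsupersets_even_odd) auto
      moreover have "\<not> e z" using False unfolding e_def T_def by auto
      ultimately show ?thesis unfolding oA oB sE sO by simp
    qed
  qed
  have "CP B dvd CP A"
    using A0 B0 count by (intro complex_dvd_by_order) auto
  moreover have "lead_coeff B = 1"
    unfolding B_def lead_coeff_prod
  proof (intro prod.neutral ballI)
    fix I assume "I \<in> Od"
    then have "m I > 0" using mpos unfolding Od_def by auto
    then show "lead_coeff (xpow_minus_one (m I)) = 1"
      unfolding xpow_minus_one_def by (rule lead_cP)
  qed
  ultimately have "B dvd A" using int_dvd_from_complex by blast
  then have "A = (A div B) * B" by simp
  then have eqC: "CP A = CP (A div B) * CP B" by (metis CP_mult)
  then have "CP (A div B) \<noteq> 0" using A0 by auto
  moreover have "order z (CP (A div B)) = (if e z then 1 else 0)" for z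
    using count[of z] eqC A0 order_mult[of "CP (A div B)" "CP B" z] by simp
  ultimately show ?thesis unfolding Qdef e_def by simp
qed


definition ee :: "nat set \<Rightarrow> complex \<Rightarrow> bool" where
  "ee \<rho> z \<longleftrightarrow> z ^ \<Prod>\<rho> = 1 \<and> (\<forall>r\<in>\<rho>. z ^ \<Prod>(\<rho> - {r}) \<noteq> 1)"

lemma adm_facts:
  assumes "admissible_set \<rho>" "r \<in> \<rho>"
  shows "\<Prod>\<rho> = r * \<Prod>(\<rho> - {r})" "\<Prod>(\<rho> - {r}) > 0" "r > 1" "\<Prod>\<rho> > 0"
proof -
  have fin: "finite \<rho>" and pos: "\<forall>r\<in>\<rho>. r > 1"
    using assms unfolding admissible_set_def by auto
  show "\<Prod>\<rho> = r * \<Prod>(\<rho> - {r})" using fin assms(2) by (rule prod.remove)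
  show "\<Prod>(\<rho> - {r}) > 0" using pos by (intro prod_pos) auto
  show "r > 1" using pos assms(2) by auto
  show "\<Prod>\<rho> > 0" using pos by (intro prod_pos) auto
qed

abbreviation zeta :: "nat \<Rightarrow> complex" where
  "zeta m \<equiv> exp (2 * of_real pi * \<i> / of_nat m)"

lemma N_dvd:
  assumes a1: "admissible_set \<rho>1" and a2: "admissible_set \<rho>2"
    and h: "\<And>z. ee \<rho>1 z \<Longrightarrow> ee \<rho>2 z"
  shows "\<Prod>\<rho>1 dvd \<Prod>\<rho>2"
proof -
  define N where "N = \<Prod>\<rho>1"
  have "\<rho>1 \<noteq> {}" using a1 unfolding admissible_set_def by auto
  then obtain r0 where "r0 \<in> \<rho>1" by blast
  have N1: "N \<ge> 1" using adm_facts(4)[OF a1 \<open>r0 \<in> \<rho>1\<close>] unfolding N_def by simp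
  have "ee \<rho>1 (zeta N)"
    unfolding ee_def
  proof (intro conjI ballI)
    show "zeta N ^ \<Prod>\<rho>1 = 1" using prim_root_pow[OF N1] N_def by simp
    fix r assume r: "r \<in> \<rho>1"
    note f = adm_facts[OF a1 r]
    have "\<Prod>(\<rho>1 - {r}) < N" unfolding N_def using f(1) n_less_m_mult_n[OF f(2)] f(3) by simp
    then have "\<not> N dvd \<Prod>(\<rho>1 - {r})" using f(2) by (meson nat_dvd_not_less)
    then show "zeta N ^ \<Prod>(\<rho>1 - {r}) \<noteq> 1" using prim_root_pow[OF N1] by simp
  qed
  then have "ee \<rho>2 (zeta N)" by (rule h)
  then have "zeta N ^ \<Prod>\<rho>2 = 1" unfolding ee_def by simp
  then show ?thesis using prim_root_pow[OF N1] N_def by simp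
qed

lemma elem_dvd:
  assumes a1: "admissible_set \<rho>1" and a2: "admissible_set \<rho>2"
    and NN: "\<Prod>\<rho>1 = \<Prod>\<rho>2"
    and h: "\<And>z. ee \<rho>2 z \<Longrightarrow> ee \<rho>1 z"
    and r: "r \<in> \<rho>1"
  shows "\<exists>r'\<in>\<rho>2. r' dvd r"
proof -
  note f = adm_facts[OF a1 r]
  define M where "M = \<Prod>(\<rho>1 - {r})"
  have M1: "M \<ge> 1" using f(2) M_def by simp
  have "zeta M ^ M = 1" using prim_root_pow[OF M1] by simp
  then have "\<not> ee \<rho>1 (zeta M)" unfolding ee_def using r M_def by auto
  then have ne: "\<not> ee \<rho>2 (zeta M)" using h by blast
  have "M dvd \<Prod>\<rho>2" using f(1) NN M_def by (metis dvd_triv_right)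
  then have "zeta M ^ \<Prod>\<rho>2 = 1" using prim_root_pow[OF M1] by simp
  with ne obtain r' where r': "r' \<in> \<rho>2" "zeta M ^ \<Prod>(\<rho>2 - {r'}) = 1"
    unfolding ee_def by auto
  then have "M dvd \<Prod>(\<rho>2 - {r'})" using prim_root_pow[OF M1] by simp
  then obtain k where k: "\<Prod>(\<rho>2 - {r'}) = M * k" by (elim dvdE)
  note f2 = adm_facts[OF a2 r'(1)]
  have "r * M = \<Prod>\<rho>1" using f(1) M_def by simp
  also have "\<dots> = \<Prod>\<rho>2" by (rule NN)
  also have "\<dots> = r' * \<Prod>(\<rho>2 - {r'})" by (rule f2(1))
  also have "\<dots> = r' * (M * k)" by (simp only: k)
  finally have "r * M = r' * (M * k)" .
  then have "M * r = M * (r' * k)" by (simp add: ac_simps)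
  then have "r = r' * k" using M1 by (subst (asm) mult_left_cancel) auto
  then have "r' dvd r" by simp
  then show ?thesis using r'(1) by blast
qed

lemma ee_eq_imp:
  assumes a1: "admissible_set \<rho>1" and a2: "admissible_set \<rho>2"
    and h: "\<And>z. ee \<rho>1 z \<longleftrightarrow> ee \<rho>2 z"
  shows "\<rho>1 = \<rho>2"
proof -
  have NN: "\<Prod>\<rho>1 = \<Prod>\<rho>2"
    using N_dvd[OF a1 a2 h[THEN iffD1]] N_dvd[OF a2 a1 h[THEN iffD2]] by (rule dvd_antisym)
  have sub: "\<rho> \<subseteq> \<rho>'" if b1: "admissible_set \<rho>" and b2: "admissible_set \<rho>'"
    and NN': "\<Prod>\<rho> = \<Prod>\<rho>'" and hh: "\<And>z. ee \<rho> z \<longleftrightarrow> ee \<rho>' z" for \<rho> \<rho>'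
  proof
    fix r assume r: "r \<in> \<rho>"
    obtain r' where r': "r' \<in> \<rho>'" "r' dvd r" using elem_dvd[OF b1 b2 NN' hh[THEN iffD2] r] by blast
    obtain r'' where r'': "r'' \<in> \<rho>" "r'' dvd r'" using elem_dvd[OF b2 b1 NN'[symmetric] hh[THEN iffD1] r'(1)] by blast
    have "r'' dvd r" using r' r'' dvd_trans by blast
    have "r'' = r"
    proof (rule ccontr)
      assume "r'' \<noteq> r"
      have cop: "\<forall>a\<in>\<rho>. \<forall>b\<in>\<rho>. a \<noteq> b \<longrightarrow> coprime a b"
        using b1 unfolding admissible_set_def by (elim conjE)
      have "coprime r'' r" using cop r r''(1) \<open>r'' \<noteq> r\<close> by simp
      with \<open>r'' dvd r\<close> have "r'' = 1" using coprime_absorb_left[OF \<open>r'' dvd r\<close>] by simp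
      with adm_facts(3)[OF b1 r''(1)] show False by simp
    qed
    then have "r dvd r'" using r'' by simp
    then have "r' = r" using r'(2) by (rule dvd_antisym[rotated])
    then show "r \<in> \<rho>'" using r' by simp
  qed
  show ?thesis using sub[OF a1 a2 NN h] sub[OF a2 a1 NN[symmetric] h[symmetric]] by (rule equalityI)
qed

theorem theorem6p2:
  fixes \<rho>1 \<rho>2 :: "nat set"
  assumes "admissible_set \<rho>1" and "admissible_set \<rho>2"
    and "incl_excl_poly \<rho>1 = incl_excl_poly \<rho>2"
  shows "\<rho>1 = \<rho>2"
proof (rule ee_eq_imp[OF assms(1,2)])
  fix z
  have o1: "order z (CP (incl_excl_poly \<rho>1)) = (if ee \<rho>1 z then 1 else 0)"
    unfolding ee_def by (rule spec[OF conjunct2[OF Q_order[OF assms(1)]]])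
  have o2: "order z (CP (incl_excl_poly \<rho>2)) = (if ee \<rho>2 z then 1 else 0)"
    unfolding ee_def by (rule spec[OF conjunct2[OF Q_order[OF assms(2)]]])
  have "(if ee \<rho>1 z then 1 else 0) = (if ee \<rho>2 z then (1::nat) else 0)"
    using o1 o2 assms(3) by metis
  then show "ee \<rho>1 z \<longleftrightarrow> ee \<rho>2 z" by (cases "ee \<rho>1 z"; cases "ee \<rho>2 z") auto
qed

end
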